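(* Let $f\in\mathcal{F}_k$. For all $p\in\Delta_\mathcal{Y}$ and $r\in\mathcal{Y}$, $\Gamma(p\odot r)=\Gamma(p)\odot r$, where $\Gamma(q)=\arg\min_{u\in\mathbb{R}^k}\sum_{y\in\mathcal{Y}}q_yL^f(u,y)$ and $p\odot r\in\Delta_\mathcal{Y}$ is defined by $(p\odot r)_y=p_{y\odot r}$.
   Context: $[k]=\{1,\dots,k\}$, $\mathcal{Y}=\{-1,1\}^k$, $\Delta_\mathcal{Y}$ the distributions on $\mathcal{Y}$; $u\odot u'$ entrywise product (extended to sets elementwise), $\mathbbm{1}$ all-ones, $(x)_+$ entrywise positive part. $\mathcal{F}_k$: submodular, increasing, normalized set functions $f:2^{[k]}\to\mathbb{R}$. Lovász extension $F(x)=\max_\pi\sum_{i=1}^kx_{\pi_i}(f(\{\pi_1,..,\pi_i\})-f(\{\pi_1,..,\pi_{i-1}\}))$ for $x\in\mathbb{R}^k_+$; Lovász hinge $L^f(u,y)=F((\mathbbm{1}-u\odot y)_+)$. *)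

theory Defs
  imports "HOL-Analysis.Analysis"
begin

text \<open>Index set [k] is the finite type 'n; vectors in R^k are real^'n.\<close>

definition ewprod :: "real^'n \<Rightarrow> real^'n \<Rightarrow> real^'n" (infixl "\<odot>" 70) where
  "u \<odot> v = (\<chi> i. u $ i * v $ i)"

definition labels :: "(real^'n) set" where
  "labels = {y. \<forall>i. y $ i \<in> {-1, 1}}"

definition distributions :: "((real^'n) \<Rightarrow> real) set" where
  "distributions = {p. (\<forall>y\<in>labels. 0 \<le> p y) \<and> (\<Sum>y\<in>labels. p y) = 1}"

definition submodular_set_fun :: "('n set \<Rightarrow> real) \<Rightarrow> bool" where
  "submodular_set_fun f \<longleftrightarrow> (\<forall>A B. f (A \<union> B) + f (A \<inter> B) \<le> f A + f B)"

definition increasing_set_fun :: "('n set \<Rightarrow> real) \<Rightarrow> bool" where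
  "increasing_set_fun f \<longleftrightarrow> (\<forall>A B. A \<subseteq> B \<longrightarrow> f A \<le> f B)"

definition normalized_set_fun :: "('n set \<Rightarrow> real) \<Rightarrow> bool" where
  "normalized_set_fun f \<longleftrightarrow> f {} = 0"

definition F_class :: "('n::finite set \<Rightarrow> real) set" where
  "F_class = {f. submodular_set_fun f \<and> increasing_set_fun f \<and> normalized_set_fun f}"

definition lovasz_ext :: "('n::finite set \<Rightarrow> real) \<Rightarrow> real^'n \<Rightarrow> real" where
  "lovasz_ext f x = Max {(\<Sum>i<CARD('n). x $ (\<pi> ! i) *
        (f (set (take (Suc i) \<pi>)) - f (set (take i \<pi>)))) | \<pi>. distinct \<pi> \<and> set \<pi> = UNIV}"

definition pos_part :: "real^'n \<Rightarrow> real^'n" where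
  "pos_part x = (\<chi> i. max (x $ i) 0)"

definition lovasz_hinge :: "('n::finite set \<Rightarrow> real) \<Rightarrow> real^'n \<Rightarrow> real^'n \<Rightarrow> real" where
  "lovasz_hinge f u y = lovasz_ext f (pos_part (1 - u \<odot> y))"

definition Gamma :: "('n::finite set \<Rightarrow> real) \<Rightarrow> (real^'n \<Rightarrow> real) \<Rightarrow> (real^'n) set" where
  "Gamma f q = {u. \<forall>v. (\<Sum>y\<in>labels. q y * lovasz_hinge f u y) \<le> (\<Sum>y\<in>labels. q y * lovasz_hinge f v y)}"

definition dist_flip :: "(real^'n \<Rightarrow> real) \<Rightarrow> real^'n \<Rightarrow> (real^'n \<Rightarrow> real)" where
  "dist_flip p r = (\<lambda>y. p (y \<odot> r))"

end

theory Submission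
  imports Defs
begin

lemma ew_rr: "r \<in> labels \<Longrightarrow> r \<odot> r = 1"
  unfolding labels_def ewprod_def by (auto simp: vec_eq_iff) (metis (no_types) empty_iff insert_iff mult_1 mult_minus_left minus_minus)

lemma ew_assoc: "(a \<odot> b) \<odot> c = a \<odot> (b \<odot> c)"
  unfolding ewprod_def by (simp add: vec_eq_iff mult.assoc)

lemma ew_comm: "a \<odot> b = b \<odot> a"
  unfolding ewprod_def by (simp add: vec_eq_iff mult.commute)

lemma ew_one: "a \<odot> 1 = a"
  unfolding ewprod_def by (simp add: vec_eq_iff)

lemma ew_inv: "r \<in> labels \<Longrightarrow> a \<odot> r \<odot> r = a"
  by (simp add: ew_assoc ew_rr ew_one)

lemma labels_closed: "y \<in> labels \<Longrightarrow> r \<in> labels \<Longrightarrow> y \<odot> r \<in> labels"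
  unfolding labels_def ewprod_def
  by simp (metis mult_1 mult_1_right mult_minus_left mult_minus_right minus_minus)

lemma obj_flip:
  fixes f :: "'n::finite set \<Rightarrow> real" and r :: "real^'n"
  assumes r: "r \<in> labels"
  shows "(\<Sum>y\<in>labels. dist_flip p r y * lovasz_hinge f u y)
       = (\<Sum>y\<in>labels. p y * lovasz_hinge f (u \<odot> r) y)"
proof -
  have "(\<Sum>y\<in>labels. dist_flip p r y * lovasz_hinge f u y)
      = (\<Sum>z\<in>labels. dist_flip p r (z \<odot> r) * lovasz_hinge f u (z \<odot> r))"
    by (rule sum.reindex_bij_witness[where i="\<lambda>y. y \<odot> r" and j="\<lambda>y. y \<odot> r"])
       (auto simp: ew_inv r labels_closed)
  also have "\<dots> = (\<Sum>y\<in>labels. p y * lovasz_hinge f (u \<odot> r) y)"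
  proof (rule sum.cong[OF refl])
    fix z :: "real^'n" assume "z \<in> labels"
    have "u \<odot> (z \<odot> r) = (u \<odot> r) \<odot> z"
      by (metis ew_assoc ew_comm)
    then show "dist_flip p r (z \<odot> r) * lovasz_hinge f u (z \<odot> r) = p z * lovasz_hinge f (u \<odot> r) z"
      by (simp add: dist_flip_def ew_inv r lovasz_hinge_def)
  qed
  finally show ?thesis .
qed

theorem lemma7:
  fixes f :: "'n::finite set \<Rightarrow> real"
  assumes "f \<in> F_class"
    and "p \<in> distributions"
    and "r \<in> labels"
  shows "Gamma f (dist_flip p r) = (\<lambda>u. u \<odot> r) ` Gamma f p"
proof -
  have G: "Gamma f (dist_flip p r) = {u. u \<odot> r \<in> Gamma f p}"
  proof -
    have "(\<forall>v. (\<Sum>y\<in>labels. p y * lovasz_hinge f (u \<odot> r) y) \<le> (\<Sum>y\<in>labels. p y * lovasz_hinge f (v \<odot> r) y))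
        \<longleftrightarrow> (\<forall>v. (\<Sum>y\<in>labels. p y * lovasz_hinge f (u \<odot> r) y) \<le> (\<Sum>y\<in>labels. p y * lovasz_hinge f v y))" for u
      by (metis ew_inv[OF assms(3)])
    then show ?thesis unfolding Gamma_def obj_flip[OF assms(3)] by simp
  qed
  show ?thesis unfolding G
  proof (intro set_eqI iffI)
    fix u assume "u \<in> {u. u \<odot> r \<in> Gamma f p}"
    then show "u \<in> (\<lambda>u. u \<odot> r) ` Gamma f p"
      by (intro image_eqI[where x="u \<odot> r"]) (auto simp: ew_inv assms(3))
  next
    fix u assume "u \<in> (\<lambda>u. u \<odot> r) ` Gamma f p"
    then show "u \<in> {u. u \<odot> r \<in> Gamma f p}" by (auto simp: ew_inv assms(3))
  qed
qed

end
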